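(* Let $K \geq 2$ be an integer and $\epsilon > 0$ small. For $x$ large put $$L = \lfloor (\log\log\log x)^{\frac13 - \epsilon}\rfloor + 1,\qquad Q = \exp\big((\log\log x)^{1-\epsilon}\big),\qquad M = \lfloor 16K^2 \rfloor + 1.$$ Suppose $p_1, \dots, p_T$ are distinct primes in the interval $[\exp((\log Q)^{\frac{4}{ML}}), Q]$ with $T \geq (2ML^2)^2$ and $$\frac12 (\log Q)^{\frac{1}{ML}} \leq \prod_{t=1}^{T}\left(1 - \frac{1}{p_t}\right)^{-1} \leq \frac32 (\log Q)^{\frac{1}{ML}}.$$ For $I \subseteq \{1,\dots,T\}$ let $m_I = \prod_{t\in I} p_t$, and let $$\mathcal{H} = \{0 \leq h \leq K\log x : h \not\equiv |I| - 1 \pmod{m_I} \text{ for every } I \subseteq \{1,\dots,T\} \text{ with } 1 \leq |I| \leq 2ML^2\}.$$ Then there is a constant $C = C(K,\epsilon)>0$ such that for all sufficiently large $x$ (depending only on $K,\epsilon$), and every such choice of primes, $$|\mathcal{H}| \leq C\,\frac{(16ML^2)^{8M^2L^4}(\log\log Q)^{4M^2L^4}}{(\log Q)^{2L}}\cdot K\log x.$$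
   Context: Here $h$ ranges over integers; $|I|$ denotes the cardinality of $I$. *)

theory Defs
  imports Complex_Main "HOL-Computational_Algebra.Primes" "HOL-Number_Theory.Cong"
begin

definition Lpar :: "real \<Rightarrow> real \<Rightarrow> nat" where
  "Lpar eps x = nat \<lfloor>(ln (ln (ln x))) powr (1/3 - eps)\<rfloor> + 1"

definition Qpar :: "real \<Rightarrow> real \<Rightarrow> real" where
  "Qpar eps x = exp ((ln (ln x)) powr (1 - eps))"

definition Mpar :: "int \<Rightarrow> nat" where
  "Mpar K = nat \<lfloor>16 * real_of_int K ^ 2\<rfloor> + 1"

definition mI :: "(nat \<Rightarrow> nat) \<Rightarrow> nat set \<Rightarrow> int" where
  "mI p I = (\<Prod>t\<in>I. int (p t))"

definition Hset :: "int \<Rightarrow> real \<Rightarrow> nat \<Rightarrow> nat \<Rightarrow> (nat \<Rightarrow> nat) \<Rightarrow> nat \<Rightarrow> int set" where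
  "Hset K x M L p T = {h::int. 0 \<le> h \<and> real_of_int h \<le> real_of_int K * ln x \<and>
      (\<forall>I. I \<subseteq> {1..T} \<and> 1 \<le> card I \<and> card I \<le> 2 * M * L^2 \<longrightarrow>
           \<not> [h = int (card I) - 1] (mod mI p I))}"

end

theory Submission
  imports Defs
begin


definition esym :: "('a \<Rightarrow> real) \<Rightarrow> 'a set \<Rightarrow> nat \<Rightarrow> real" where
  "esym x A i = (\<Sum>S\<in>{S. S \<subseteq> A \<and> card S = i}. \<Prod>t\<in>S. x t)"

definition bsum :: "('a \<Rightarrow> real) \<Rightarrow> 'a set \<Rightarrow> nat \<Rightarrow> real" where
  "bsum x A n = (\<Sum>i<n. (-1)^i * esym x A i)"

lemma esym_0: "finite A \<Longrightarrow> esym x A 0 = 1"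
proof -
  assume "finite A"
  hence "{S. S \<subseteq> A \<and> card S = 0} = {{}}"
    using card_eq_0_iff finite_subset by fastforce
  thus ?thesis by (simp add: esym_def)
qed

lemma esym_empty_Suc: "esym x {} (Suc i) = 0"
proof -
  have "{S. S \<subseteq> {} \<and> card S = Suc i} = {}" by auto
  thus ?thesis by (simp add: esym_def)
qed

lemma esym_insert:
  assumes "finite A" "a \<notin> A"
  shows "esym x (insert a A) (Suc i) = esym x A (Suc i) + x a * esym x A i"
proof -
  have eq: "{S. S \<subseteq> insert a A \<and> card S = Suc i} =
     {S. S \<subseteq> A \<and> card S = Suc i} \<union> (insert a) ` {S. S \<subseteq> A \<and> card S = i}"
  proof (intro equalityI subsetI)
    fix S assume "S \<in> {S. S \<subseteq> insert a A \<and> card S = Suc i}"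
    hence S: "S \<subseteq> insert a A" "card S = Suc i" by auto
    have fS: "finite S" using S assms(1) finite_subset by blast
    show "S \<in> {S. S \<subseteq> A \<and> card S = Suc i} \<union> (insert a) ` {S. S \<subseteq> A \<and> card S = i}"
    proof (cases "a \<in> S")
      case True
      have "S = insert a (S - {a})" using True by auto
      moreover have "S - {a} \<subseteq> A" "card (S - {a}) = i" using S True fS by auto
      ultimately show ?thesis by blast
    next
      case False thus ?thesis using S by auto
    qed
  next
    fix S assume "S \<in> {S. S \<subseteq> A \<and> card S = Suc i} \<union> (insert a) ` {S. S \<subseteq> A \<and> card S = i}"
    thus "S \<in> {S. S \<subseteq> insert a A \<and> card S = Suc i}"
    proof
      assume "S \<in> {S. S \<subseteq> A \<and> card S = Suc i}" thus ?thesis by auto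
    next
      assume "S \<in> (insert a) ` {S. S \<subseteq> A \<and> card S = i}"
      then obtain R where R: "R \<subseteq> A" "card R = i" "S = insert a R" by auto
      have "finite R" using R assms(1) finite_subset by blast
      moreover have "a \<notin> R" using R assms(2) by auto
      ultimately show ?thesis using R by auto
    qed
  qed
  have fin1: "finite {S. S \<subseteq> A \<and> card S = Suc i}" using assms(1) by auto
  have fin2: "finite {S. S \<subseteq> A \<and> card S = i}" using assms(1) by auto
  have disj: "{S. S \<subseteq> A \<and> card S = Suc i} \<inter> (insert a) ` {S. S \<subseteq> A \<and> card S = i} = {}"
    using assms(2) by auto
  have inj: "inj_on (insert a) {S. S \<subseteq> A \<and> card S = i}"
    unfolding inj_on_def using assms(2) by (metis (no_types, lifting) insert_ident mem_Collect_eq subset_iff)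
  have "esym x (insert a A) (Suc i) = (\<Sum>S\<in>{S. S \<subseteq> A \<and> card S = Suc i}. \<Prod>t\<in>S. x t)
        + (\<Sum>S\<in>(insert a) ` {S. S \<subseteq> A \<and> card S = i}. \<Prod>t\<in>S. x t)"
    unfolding esym_def eq by (rule sum.union_disjoint) (use fin1 fin2 disj in auto)
  also have "(\<Sum>S\<in>(insert a) ` {S. S \<subseteq> A \<and> card S = i}. \<Prod>t\<in>S. x t)
       = (\<Sum>S\<in>{S. S \<subseteq> A \<and> card S = i}. \<Prod>t\<in>insert a S. x t)"
    by (rule sum.reindex[OF inj, unfolded comp_def])
  also have "\<dots> = (\<Sum>S\<in>{S. S \<subseteq> A \<and> card S = i}. x a * (\<Prod>t\<in>S. x t))"
  proof (rule sum.cong)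
    fix S assume "S \<in> {S. S \<subseteq> A \<and> card S = i}"
    hence "S \<subseteq> A" by auto
    hence "finite S" "a \<notin> S" using assms finite_subset by auto
    thus "(\<Prod>t\<in>insert a S. x t) = x a * (\<Prod>t\<in>S. x t)" by simp
  qed simp
  finally show ?thesis by (simp add: esym_def sum_distrib_left)
qed

lemma bsum_insert:
  assumes "finite A" "a \<notin> A"
  shows "bsum x (insert a A) (Suc m) = bsum x A (Suc m) - x a * bsum x A m"
proof -
  have "bsum x (insert a A) (Suc m) = 1 + (\<Sum>i<m. (-1)^(Suc i) * esym x (insert a A) (Suc i))"
    unfolding bsum_def sum.lessThan_Suc_shift using assms esym_0[of "insert a A"] by simp
  also have "\<dots> = 1 + (\<Sum>i<m. (-1)^(Suc i) * esym x A (Suc i)) - x a * (\<Sum>i<m. (-1)^i * esym x A i)"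
    by (simp add: esym_insert[OF assms] algebra_simps sum.distrib sum_distrib_left sum_subtractf)
  also have "\<dots> = bsum x A (Suc m) - x a * bsum x A m"
    unfolding bsum_def sum.lessThan_Suc_shift using assms esym_0[of A] by simp
  finally show ?thesis .
qed

lemma prod_one_minus_bounds:
  fixes x :: "'a \<Rightarrow> real"
  assumes "finite A" "\<And>t. t \<in> A \<Longrightarrow> 0 \<le> x t \<and> x t \<le> 1"
  shows "0 \<le> (\<Prod>t\<in>A. 1 - x t) \<and> (\<Prod>t\<in>A. 1 - x t) \<le> 1"
proof
  show "0 \<le> (\<Prod>t\<in>A. 1 - x t)" using assms by (simp add: prod_nonneg)
  show "(\<Prod>t\<in>A. 1 - x t) \<le> 1" by (rule prod_le_1) (use assms in auto)
qed

lemma bonferroni: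
  assumes "finite A" "\<And>t. t \<in> A \<Longrightarrow> 0 \<le> x t \<and> x t \<le> 1"
  shows "0 \<le> (-1)^n * ((\<Prod>t\<in>A. 1 - x t) - bsum x A n) \<and>
         (-1)^n * ((\<Prod>t\<in>A. 1 - x t) - bsum x A n) \<le> esym x A n"
  using assms
proof (induction A arbitrary: n rule: finite_induct)
  case empty
  show ?case
  proof (cases n)
    case 0 thus ?thesis by (simp add: bsum_def esym_0)
  next
    case (Suc m)
    have "bsum x {} n = 1"
      unfolding Suc bsum_def sum.lessThan_Suc_shift by (simp add: esym_0 esym_empty_Suc)
    thus ?thesis using Suc by (simp add: esym_empty_Suc)
  qed
next
  case (insert a A)
  have bnd: "\<And>t. t \<in> A \<Longrightarrow> 0 \<le> x t \<and> x t \<le> 1" using insert.prems by auto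
  have xa: "0 \<le> x a" "x a \<le> 1" using insert.prems by auto
  show ?case
  proof (cases n)
    case 0
    have "0 \<le> (\<Prod>t\<in>insert a A. 1 - x t) \<and> (\<Prod>t\<in>insert a A. 1 - x t) \<le> 1"
      using prod_one_minus_bounds[of "insert a A" x] insert by auto
    thus ?thesis using 0 insert by (simp add: bsum_def esym_0)
  next
    case (Suc m)
    define R where "R k = (\<Prod>t\<in>A. 1 - x t) - bsum x A k" for k
    have IH1: "0 \<le> (-1)^Suc m * R (Suc m)" "(-1)^Suc m * R (Suc m) \<le> esym x A (Suc m)"
      using insert.IH[OF bnd, of "Suc m"] by (auto simp: R_def)
    have IH2: "0 \<le> (-1)^m * R m" "(-1)^m * R m \<le> esym x A m"
      using insert.IH[OF bnd, of m] by (auto simp: R_def)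
    have key: "(-1)^n * ((\<Prod>t\<in>insert a A. 1 - x t) - bsum x (insert a A) n)
        = (-1)^Suc m * R (Suc m) + x a * ((-1)^m * R m)"
      unfolding Suc R_def using insert(1,2) by (simp add: bsum_insert algebra_simps)
    have "x a * ((-1)^m * R m) \<le> x a * esym x A m" using IH2 xa by (simp add: mult_left_mono)
    moreover have "0 \<le> x a * ((-1)^m * R m)" using IH2 xa by simp
    ultimately show ?thesis unfolding key using IH1 Suc esym_insert[OF insert(1,2)] by auto
  qed
qed

lemma pow_bernoulli_aux:
  fixes s y :: real
  assumes "0 \<le> s" "0 \<le> y"
  shows "s^(Suc m) + real (Suc m) * y * s^m \<le> (s+y)^(Suc m)"
proof (induction m)
  case 0 thus ?case by simp
next
  case (Suc m)
  have "(s+y)^(Suc (Suc m)) = (s+y) * (s+y)^(Suc m)" by simp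
  also have "\<dots> \<ge> (s+y) * (s^(Suc m) + real (Suc m) * y * s^m)"
    using Suc assms by (intro mult_left_mono) auto
  finally have *: "(s+y) * (s^(Suc m) + real (Suc m) * y * s^m) \<le> (s+y)^(Suc (Suc m))" .
  have "s^(Suc (Suc m)) + real (Suc (Suc m)) * y * s^(Suc m)
     \<le> (s+y) * (s^(Suc m) + real (Suc m) * y * s^m)"
    using assms by (simp add: algebra_simps)
  thus ?case using * by linarith
qed

lemma esym_le:
  assumes "finite A" "\<And>t. t \<in> A \<Longrightarrow> 0 \<le> x t"
  shows "esym x A n * fact n \<le> (sum x A)^n"
  using assms
proof (induction A arbitrary: n rule: finite_induct)
  case empty thus ?case by (cases n) (auto simp: esym_0 esym_empty_Suc)
next
  case (insert a A)
  have nn: "\<And>t. t \<in> A \<Longrightarrow> 0 \<le> x t" using insert.prems by auto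
  have xa: "0 \<le> x a" using insert.prems by auto
  have s: "0 \<le> sum x A" using nn by (simp add: sum_nonneg)
  show ?case
  proof (cases n)
    case 0 thus ?thesis using insert by (simp add: esym_0)
  next
    case (Suc m)
    have e1: "esym x A (Suc m) * fact (Suc m) \<le> (sum x A)^(Suc m)" using insert.IH[OF nn] .
    have e2: "esym x A m * fact m \<le> (sum x A)^m" using insert.IH[OF nn] .
    have "esym x (insert a A) n * fact n = esym x A (Suc m) * fact (Suc m)
       + real (Suc m) * x a * (esym x A m * fact m)"
      unfolding Suc using esym_insert[OF insert(1,2)] by (simp add: algebra_simps)
    also have "\<dots> \<le> (sum x A)^(Suc m) + real (Suc m) * x a * (sum x A)^m"
      using e1 e2 xa by (intro add_mono mult_left_mono) auto
    also have "\<dots> \<le> (sum x A + x a)^(Suc m)" using pow_bernoulli_aux[OF s xa] by simp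
    finally show ?thesis using insert Suc by (simp add: add.commute)
  qed
qed



definition good :: "(nat \<Rightarrow> nat) \<Rightarrow> nat \<Rightarrow> nat set \<Rightarrow> nat \<Rightarrow> bool" where
  "good p J S h = (\<forall>t\<in>S. h mod p t < J)"

definition mS :: "(nat \<Rightarrow> nat) \<Rightarrow> nat set \<Rightarrow> nat" where
  "mS p S = (\<Prod>t\<in>S. p t)"

lemma dvd_mS: "finite S \<Longrightarrow> t \<in> S \<Longrightarrow> p t dvd mS p S"
  unfolding mS_def by (rule dvd_prodI)

lemma mS_pos: "(\<forall>t\<in>S. prime (p t)) \<Longrightarrow> 0 < mS p S"
  unfolding mS_def by (metis prime_gt_0_nat prod_pos)

lemma good_mod: "finite S \<Longrightarrow> good p J S (h mod mS p S) = good p J S h"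
  unfolding good_def by (auto simp: mod_mod_cancel dvd_mS)

lemma good_periodic: "finite S \<Longrightarrow> good p J S (h + mS p S) = good p J S h"
  by (metis good_mod mod_add_self2)

lemma coprime_mS:
  assumes "finite S" "\<forall>t\<in>insert a S. prime (p t)" "inj_on p (insert a S)" "a \<notin> S"
  shows "coprime (p a) (mS p S)"
proof -
  have pa: "prime (p a)" using assms by auto
  have "\<not> p a dvd mS p S"
  proof
    assume "p a dvd mS p S"
    then obtain t where t: "t \<in> S" "p a dvd p t" unfolding mS_def
      using prime_dvd_prod_iff[OF assms(1) pa] by auto
    hence "p a = p t" using assms(2) pa by (auto simp: primes_dvd_imp_eq)
    thus False using assms(3,4) t by (metis inj_on_contraD insertCI)
  qed
  thus ?thesis using pa prime_imp_coprime by blast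
qed

lemma crt_count:
  assumes "finite S" "\<forall>t\<in>S. prime (p t) \<and> J \<le> p t" "inj_on p S"
  shows "card {h. h < mS p S \<and> good p J S h} = J ^ card S"
  using assms
proof (induction S rule: finite_induct)
  case empty
  have "{h. h < mS p {} \<and> good p J {} h} = {0}" by (auto simp: mS_def good_def)
  thus ?case by simp
next
  case (insert a S)
  define m where "m = mS p S"
  define q where "q = p a"
  have cop: "coprime q m" unfolding q_def m_def
    using coprime_mS[OF insert(1) _ insert.prems(2) insert(2)] insert.prems(1) by auto
  have qJ: "J \<le> q" and qp: "0 < q" using insert.prems unfolding q_def by (auto simp: prime_gt_0_nat)
  have mp: "0 < m" unfolding m_def using insert.prems by (auto intro: mS_pos)
  have m': "mS p (insert a S) = q * m" unfolding mS_def m_def q_def using insert(1,2) by simp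
  define f where "f h = (h mod q, h mod m)" for h
  have goodins: "good p J (insert a S) h = (h mod q < J \<and> good p J S h)" for h
    unfolding good_def q_def by auto
  have inj: "inj_on f {h. h < q * m \<and> good p J (insert a S) h}"
  proof (rule inj_onI)
    fix h h' assume h: "h \<in> {h. h < q * m \<and> good p J (insert a S) h}"
      and h': "h' \<in> {h. h < q * m \<and> good p J (insert a S) h}" and e: "f h = f h'"
    have "[h = h'] (mod q)" "[h = h'] (mod m)" using e by (auto simp: f_def cong_def)
    hence "[h = h'] (mod q * m)" using cop by (simp add: coprime_cong_mult_nat)
    thus "h = h'" using h h' cong_less_modulus_unique_nat by auto
  qed
  have img: "f ` {h. h < q * m \<and> good p J (insert a S) h} = {..<J} \<times> {g. g < m \<and> good p J S g}"
  proof (intro equalityI subsetI)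
    fix z assume "z \<in> f ` {h. h < q * m \<and> good p J (insert a S) h}"
    then obtain h where h: "h < q*m" "good p J (insert a S) h" "z = f h" by auto
    thus "z \<in> {..<J} \<times> {g. g < m \<and> good p J S g}"
      using goodins[of h] good_mod[OF insert(1), of p J h] mp
      by (auto simp: f_def m_def)
  next
    fix z assume "z \<in> {..<J} \<times> {g. g < m \<and> good p J S g}"
    then obtain j g where z: "z = (j, g)" "j < J" "g < m" "good p J S g" by auto
    obtain h0 where h0: "[h0 = j] (mod q)" "[h0 = g] (mod m)"
      using binary_chinese_remainder_nat[OF cop] by blast
    define h where "h = h0 mod (q * m)"
    have hlt: "h < q * m" unfolding h_def using qp mp by simp
    have "h mod q = h0 mod q" unfolding h_def by (simp add: mod_mod_cancel)
    hence hq: "h mod q = j" using h0(1) z(2) qJ by (simp add: cong_def)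
    have "h mod m = h0 mod m" unfolding h_def by (simp add: mod_mod_cancel)
    hence hm: "h mod m = g" using h0(2) z(3) by (simp add: cong_def)
    have "good p J S h" using good_mod[OF insert(1), of p J h] z(4) hm by (simp add: m_def)
    hence "good p J (insert a S) h" using goodins hq z(2) by simp
    moreover have "f h = z" using hq hm z by (simp add: f_def)
    ultimately show "z \<in> f ` {h. h < q * m \<and> good p J (insert a S) h}" using hlt by blast
  qed
  have IH: "card {g. g < m \<and> good p J S g} = J ^ card S"
    unfolding m_def using insert.IH insert.prems by (auto intro: inj_on_subset)
  have "card {h. h < mS p (insert a S) \<and> good p J (insert a S) h}
      = card (f ` {h. h < q * m \<and> good p J (insert a S) h})"
    unfolding m' using card_image[OF inj] by simp
  also have "\<dots> = J * J ^ card S" unfolding img card_cartesian_product IH by simp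
  finally show ?case using insert(1,2) by simp
qed

lemma count_periodic:
  assumes "0 < m" "\<And>h. P (h + m) = P h"
  shows "card {h. h < q*m + r \<and> P h} = q * card {h. h < m \<and> P h} + card {h. h < r \<and> P h}"
proof (induction q)
  case 0 thus ?case by simp
next
  case (Suc q)
  define X where "X = q*m + r"
  have eq: "{h. h < m + X \<and> P h} = {h. h < m \<and> P h} \<union> (\<lambda>h. h + m) ` {h. h < X \<and> P h}"
  proof (intro equalityI subsetI)
    fix h assume "h \<in> {h. h < m + X \<and> P h}"
    hence h: "h < m + X" "P h" by auto
    show "h \<in> {h. h < m \<and> P h} \<union> (\<lambda>h. h + m) ` {h. h < X \<and> P h}"
    proof (cases "h < m")
      case True thus ?thesis using h by auto
    next
      case False
      hence "h = (h - m) + m" "h - m < X" "P ((h - m) + m)" using h by auto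
      hence "P (h - m)" using assms(2) by metis
      thus ?thesis using \<open>h = (h - m) + m\<close> \<open>h - m < X\<close> by blast
    qed
  next
    fix h assume "h \<in> {h. h < m \<and> P h} \<union> (\<lambda>h. h + m) ` {h. h < X \<and> P h}"
    thus "h \<in> {h. h < m + X \<and> P h}" using assms(2) by auto
  qed
  have "card {h. h < m + X \<and> P h} = card {h. h < m \<and> P h} + card ((\<lambda>h. h + m) ` {h. h < X \<and> P h})"
    unfolding eq by (rule card_Un_disjoint) auto
  also have "card ((\<lambda>h. h + m) ` {h. h < X \<and> P h}) = card {h. h < X \<and> P h}"
    by (rule card_image) (auto simp: inj_on_def)
  finally show ?case using Suc by (simp add: X_def algebra_simps)
qed

lemma count_good:
  assumes "finite S" "\<forall>t\<in>S. prime (p t) \<and> J \<le> p t" "inj_on p S"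
  shows "\<bar>real (card {h. h < N0 \<and> good p J S h}) - real N0 * real J ^ card S / real (mS p S)\<bar>
           \<le> real J ^ card S"
proof -
  define m where "m = mS p S"
  have mp: "0 < m" unfolding m_def using assms by (auto intro: mS_pos)
  define D where "D = card {h. h < m \<and> good p J S h}"
  have D: "D = J ^ card S" unfolding D_def m_def using crt_count[OF assms] .
  define q where "q = N0 div m"
  define r where "r = N0 mod m"
  have N0: "N0 = q * m + r" unfolding q_def r_def by simp
  have cnt: "card {h. h < N0 \<and> good p J S h} = q * D + card {h. h < r \<and> good p J S h}"
    unfolding N0 D_def
    by (rule count_periodic[OF mp]) (use good_periodic[OF assms(1)] m_def in auto)
  have rlt: "r < m" unfolding r_def using mp by simp
  have cr: "card {h. h < r \<and> good p J S h} \<le> D"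
    unfolding D_def by (rule card_mono) (use rlt in auto)
  define x where "x = real r * real D / real m"
  have e1: "real N0 * real D / real m = real q * real D + x"
    unfolding N0 x_def using mp by (simp add: field_simps)
  have e2: "0 \<le> x" unfolding x_def by simp
  have e3: "x \<le> real D" unfolding x_def
    using rlt mp by (simp add: field_simps mult_left_mono)
  define c where "c = card {h. h < r \<and> good p J S h}"
  have e4: "real c \<le> real D" using cr unfolding c_def by simp
  have e5: "real (q * D + c) = real q * real D + real c" by simp
  have "\<bar>real (q * D + c) - real N0 * real D / real m\<bar> \<le> real D"
    unfolding e1 e5 abs_le_iff using e2 e3 e4 by linarith
  hence "\<bar>real (q * D + card {h. h < r \<and> good p J S h}) - real N0 * real D / real m\<bar> \<le> real D"
    unfolding c_def .
  thus ?thesis using cnt D by (simp add: m_def)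
qed



lemma prod_if_pow:
  fixes z :: real
  assumes "finite A"
  shows "(\<Prod>t\<in>A. if P t then z else 1) = z ^ card {t\<in>A. P t}"
proof -
  have "(\<Prod>t\<in>A. if P t then z else 1) = (\<Prod>t\<in>A \<inter> {t. P t}. z) * (\<Prod>t\<in>A \<inter> - {t. P t}. 1)"
    by (rule prod.If_cases[OF assms])
  also have "\<dots> = z ^ card (A \<inter> {t. P t})" by simp
  finally show ?thesis by (simp add: Collect_conj_eq Int_commute Collect_mem_eq)
qed

lemma sieve_core:
  fixes p :: "nat \<Rightarrow> nat" and z :: real
  assumes A: "finite A" and pr: "\<forall>t\<in>A. prime (p t) \<and> J \<le> p t" and inj: "inj_on p A"
    and z: "0 < z" "z \<le> 1" and n: "odd n"
  shows "real (card {h. h < N0 \<and> card {t\<in>A. h mod p t < J} \<le> k}) \<le>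
    (1/z)^k * (real N0 * ((\<Prod>t\<in>A. 1 - (1-z) * J / p t) + esym (\<lambda>t. (1-z) * J / p t) A n)
      + (\<Sum>i<n. real (card {S. S \<subseteq> A \<and> card S = i}) * real J ^ i))"
proof -
  define w where "w = 1 - z"
  have w: "0 \<le> w" "w \<le> 1" using z unfolding w_def by auto
  define x where "x h t = w * (if h mod p t < J then 1 else 0)" for h t
  define y where "y t = w * J / p t" for t
  define c where "c h = card {t\<in>A. h mod p t < J}" for h
  define G where "G = {h. h < N0 \<and> c h \<le> k}"
  have xb: "0 \<le> x h t \<and> x h t \<le> 1" for h t unfolding x_def using w by auto
  have prodx: "(\<Prod>t\<in>A. 1 - x h t) = z ^ c h" for h
  proof -
    have "(\<Prod>t\<in>A. 1 - x h t) = (\<Prod>t\<in>A. if h mod p t < J then z else 1)"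
      by (rule prod.cong) (auto simp: x_def w_def)
    thus ?thesis using prod_if_pow[OF A] by (simp add: c_def)
  qed
  have bon: "(\<Prod>t\<in>A. 1 - x h t) \<le> bsum (x h) A n" for h
    using bonferroni[OF A, of "x h" n] xb n by auto
  have pos: "0 \<le> bsum (x h) A n" for h
    using bon[of h] prodx[of h] z by (metis order_trans zero_le_power less_imp_le)
  have ind: "1 \<le> (1/z)^k * bsum (x h) A n" if "h \<in> G" for h
  proof -
    have "z ^ k \<le> z ^ c h" using that z unfolding G_def by (auto intro: power_decreasing)
    hence "1 \<le> (1/z)^k * z ^ c h" using z by (simp add: field_simps)
    also have "\<dots> \<le> (1/z)^k * bsum (x h) A n"
      using bon[of h] prodx[of h] z by (intro mult_left_mono) auto
    finally show ?thesis .
  qed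
  have "real (card G) = (\<Sum>h\<in>G. 1)" by simp
  also have "\<dots> \<le> (\<Sum>h\<in>G. (1/z)^k * bsum (x h) A n)"
    by (rule sum_mono) (use ind in auto)
  also have "\<dots> \<le> (\<Sum>h<N0. (1/z)^k * bsum (x h) A n)"
    by (rule sum_mono2) (use pos z in \<open>auto simp: G_def\<close>)
  also have "\<dots> = (1/z)^k * (\<Sum>h<N0. bsum (x h) A n)" by (simp add: sum_distrib_left)
  finally have step1: "real (card G) \<le> (1/z)^k * (\<Sum>h<N0. bsum (x h) A n)" .
  define Sub where "Sub i = {S. S \<subseteq> A \<and> card S = i}" for i
  have finSub: "finite (Sub i)" for i unfolding Sub_def using A by auto
  have px: "(\<Prod>t\<in>S. x h t) = w ^ card S * (if good p J S h then 1 else 0)" if "finite S" for S h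
  proof -
    have "(\<Prod>t\<in>S. x h t) = (\<Prod>t\<in>S. w) * (\<Prod>t\<in>S. if h mod p t < J then 1 else 0)"
      unfolding x_def by (simp add: prod.distrib)
    also have "(\<Prod>t\<in>S. (if h mod p t < J then 1 else 0::real)) = (if good p J S h then 1 else 0)"
      unfolding good_def using that by (simp add: prod_if_pow)
    finally show ?thesis by simp
  qed
  have cntS: "(\<Sum>h<N0. \<Prod>t\<in>S. x h t) = w ^ card S * real (card {h. h < N0 \<and> good p J S h})"
    if "finite S" for S
  proof -
    have "(\<Sum>h<N0. \<Prod>t\<in>S. x h t) = w ^ card S * (\<Sum>h<N0. if good p J S h then 1 else 0)"
      using px[OF that] by (simp add: sum_distrib_left)
    also have "(\<Sum>h<N0. if good p J S h then 1 else (0::real)) = real (card {h. h < N0 \<and> good p J S h})"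
      by (simp add: sum.If_cases Int_def lessThan_def)
    finally show ?thesis .
  qed
  have term_bound: "(-1)^i * (\<Sum>h<N0. \<Prod>t\<in>S. x h t) \<le> (-1)^i * (real N0 * (\<Prod>t\<in>S. y t)) + real J ^ i"
    if "S \<in> Sub i" for S i
  proof -
    have S: "S \<subseteq> A" "card S = i" "finite S" using that A finite_subset unfolding Sub_def by auto
    have prS: "\<forall>t\<in>S. prime (p t) \<and> J \<le> p t" "inj_on p S" using S pr inj inj_on_subset by auto
    have cg: "\<bar>real (card {h. h < N0 \<and> good p J S h}) - real N0 * real J ^ card S / real (mS p S)\<bar> \<le> real J ^ card S"
      by (rule count_good[OF S(3) prS])
    have py: "(\<Prod>t\<in>S. y t) = w ^ card S * real J ^ card S / real (mS p S)"
      unfolding y_def mS_def by (simp add: prod_dividef prod.distrib power_mult_distrib)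
    define E where "E = real (card {h. h < N0 \<and> good p J S h}) - real N0 * real J ^ card S / real (mS p S)"
    have "(-1)^i * (\<Sum>h<N0. \<Prod>t\<in>S. x h t) = (-1)^i * (real N0 * (\<Prod>t\<in>S. y t)) + (-1)^i * w ^ i * E"
      unfolding cntS[OF S(3)] py E_def S(2) by (simp add: algebra_simps)
    also have "(-1)^i * w ^ i * E \<le> real J ^ i"
    proof -
      have "\<bar>(-1)^i * w ^ i * E\<bar> = w^i * \<bar>E\<bar>" using w by (simp add: abs_mult power_abs)
      also have "\<dots> \<le> 1 * real J ^ i"
        using cg w S(2) unfolding E_def by (intro mult_mono) (auto simp: power_le_one)
      finally show ?thesis by simp
    qed
    finally show ?thesis by simp
  qed
  have "(\<Sum>h<N0. bsum (x h) A n) = (\<Sum>i<n. (-1)^i * (\<Sum>S\<in>Sub i. \<Sum>h<N0. \<Prod>t\<in>S. x h t))"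
    unfolding bsum_def esym_def Sub_def
    by (simp add: sum_distrib_left sum.swap[where A="{..<N0}"])
  also have "\<dots> \<le> (\<Sum>i<n. (\<Sum>S\<in>Sub i. (-1)^i * (real N0 * (\<Prod>t\<in>S. y t)) + real J ^ i))"
  proof (rule sum_mono)
    fix i assume "i \<in> {..<n}"
    have "(-1)^i * (\<Sum>S\<in>Sub i. \<Sum>h<N0. \<Prod>t\<in>S. x h t) = (\<Sum>S\<in>Sub i. (-1)^i * (\<Sum>h<N0. \<Prod>t\<in>S. x h t))"
      by (rule sum_distrib_left)
    also have "\<dots> \<le> (\<Sum>S\<in>Sub i. (-1)^i * (real N0 * (\<Prod>t\<in>S. y t)) + real J ^ i)"
      by (rule sum_mono) (rule term_bound)
    finally show "(-1)^i * (\<Sum>S\<in>Sub i. \<Sum>h<N0. \<Prod>t\<in>S. x h t) \<le> (\<Sum>S\<in>Sub i. (-1)^i * (real N0 * (\<Prod>t\<in>S. y t)) + real J ^ i)" .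
  qed
  also have "\<dots> = real N0 * bsum y A n + (\<Sum>i<n. real (card (Sub i)) * real J ^ i)"
    unfolding bsum_def esym_def Sub_def
    by (simp add: sum.distrib sum_distrib_left algebra_simps)
  finally have step2: "(\<Sum>h<N0. bsum (x h) A n) \<le> real N0 * bsum y A n + (\<Sum>i<n. real (card (Sub i)) * real J ^ i)" .
  have yb: "0 \<le> y t \<and> y t \<le> 1" if "t \<in> A" for t
  proof -
    have "J \<le> p t" "0 < p t" using pr that by (auto simp: prime_gt_0_nat)
    hence "w * real J \<le> 1 * real (p t)" using w by (intro mult_mono) auto
    thus ?thesis unfolding y_def using w \<open>0 < p t\<close> by (auto simp: field_simps)
  qed
  have "bsum y A n \<le> (\<Prod>t\<in>A. 1 - y t) + esym y A n"
    using bonferroni[OF A, of y n] yb n by auto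
  hence "real N0 * bsum y A n \<le> real N0 * ((\<Prod>t\<in>A. 1 - y t) + esym y A n)"
    by (intro mult_left_mono) auto
  hence "real (card G) \<le> (1/z)^k * (real N0 * ((\<Prod>t\<in>A. 1 - y t) + esym y A n) + (\<Sum>i<n. real (card (Sub i)) * real J ^ i))"
    using step1 step2 z by (smt (verit) mult_left_mono zero_le_divide_1_iff zero_le_power)
  thus ?thesis unfolding G_def c_def y_def w_def Sub_def .
qed



lemma card_lt_sum:
  assumes "finite A"
  shows "card {t\<in>A. f t < (J::nat)} = (\<Sum>j<J. card {t\<in>A. f t = j})"
proof -
  have "{t\<in>A. f t < J} = (\<Union>j\<in>{..<J}. {t\<in>A. f t = j})" by auto
  hence "card {t\<in>A. f t < J} = card (\<Union>j\<in>{..<J}. {t\<in>A. f t = j})" by simp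
  also have "\<dots> = (\<Sum>j<J. card {t\<in>A. f t = j})"
    by (rule card_UN_disjoint) (use assms in auto)
  finally show ?thesis .
qed

lemma pow_fact_le_exp:
  fixes a :: real
  assumes "0 \<le> a"
  shows "a ^ n / fact n \<le> exp a"
proof -
  have s: "summable (\<lambda>k. a ^ k /\<^sub>R fact k)" using exp_converges[of a] sums_summable by blast
  have "(\<Sum>k\<in>{n}. a ^ k /\<^sub>R fact k) \<le> (\<Sum>k. a ^ k /\<^sub>R fact k)"
    by (rule sum_le_suminf[OF s]) (use assms in auto)
  also have "\<dots> = exp a" using exp_converges[of a] sums_unique by metis
  finally show ?thesis by (simp add: divide_inverse mult.commute)
qed



lemma Hset_sub:
  fixes K :: int and x :: real
  assumes pr: "\<forall>t\<in>{1..T}. prime (p t)" and inj: "inj_on p {1..T}" and J: "J = 2*M*L^2"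
  shows "Hset K x M L p T \<subseteq> int ` {h. h < nat \<lfloor>real_of_int K * ln x\<rfloor> + 1 \<and>
            card {t\<in>{1..T}. h mod p t < J} \<le> J * J}"
proof
  fix h assume hH: "h \<in> Hset K x M L p T"
  have h0: "0 \<le> h" and hle: "real_of_int h \<le> real_of_int K * ln x"
    and hc: "\<And>I. I \<subseteq> {1..T} \<Longrightarrow> 1 \<le> card I \<Longrightarrow> card I \<le> 2 * M * L^2 \<Longrightarrow>
           \<not> [h = int (card I) - 1] (mod mI p I)"
    using hH unfolding Hset_def by auto
  define hn where "hn = nat h"
  have hh: "h = int hn" unfolding hn_def using h0 by simp
  have hlt: "hn < nat \<lfloor>real_of_int K * ln x\<rfloor> + 1"
  proof -
    have "h \<le> \<lfloor>real_of_int K * ln x\<rfloor>" using hle by (simp add: le_floor_iff)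
    thus ?thesis unfolding hn_def using h0 by linarith
  qed
  have each: "card {t\<in>{1..T}. hn mod p t = j} \<le> j" if "j < J" for j
  proof (rule ccontr)
    assume "\<not> card {t\<in>{1..T}. hn mod p t = j} \<le> j"
    hence "Suc j \<le> card {t\<in>{1..T}. hn mod p t = j}" by simp
    then obtain I where I: "I \<subseteq> {t\<in>{1..T}. hn mod p t = j}" "card I = Suc j"
      by (rule obtain_subset_with_card_n)
    have IT: "I \<subseteq> {1..T}" using I by auto
    have finI: "finite I" using IT finite_subset by blast
    have "[h = int j] (mod (\<Prod>t\<in>I. int (p t)))"
    proof (rule cong_cong_prod_coprime)
      show "\<forall>t\<in>I. [h = int j] (mod int (p t))"
      proof
        fix t assume "t \<in> I"
        hence "hn mod p t = j" using I by auto
        hence e: "hn mod p t = j mod p t" by (metis mod_mod_trivial)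
        have "int hn mod int (p t) = int j mod int (p t)"
          unfolding zmod_int[symmetric] e ..
        thus "[h = int j] (mod int (p t))" unfolding hh cong_def .
      qed
      show "\<forall>i\<in>I. \<forall>j\<in>I. i \<noteq> j \<longrightarrow> coprime (int (p i)) (int (p j))"
      proof (intro ballI impI)
        fix a b assume ab: "a \<in> I" "b \<in> I" "a \<noteq> b"
        hence "p a \<noteq> p b" using inj IT unfolding inj_on_def by blast
        moreover have "prime (p a)" "prime (p b)" using pr IT ab by auto
        ultimately have "coprime (p a) (p b)" by (simp add: primes_coprime)
        thus "coprime (int (p a)) (int (p b))" by simp
      qed
    qed
    hence "[h = int (card I) - 1] (mod mI p I)" unfolding mI_def I(2) by simp
    moreover have "card I \<le> 2 * M * L^2" using I(2) that J by simp
    ultimately show False using hc[OF IT] I(2) by simp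
  qed
  have "card {t\<in>{1..T}. hn mod p t < J} = (\<Sum>j<J. card {t\<in>{1..T}. hn mod p t = j})"
    by (rule card_lt_sum) simp
  also have "\<dots> \<le> (\<Sum>j<J. J)" proof (rule sum_mono)
    fix j assume "j \<in> {..<J}"
    hence "j < J" by simp
    thus "card {t\<in>{1..T}. hn mod p t = j} \<le> J" using each[of j] by linarith
  qed
  also have "\<dots> = J * J" by simp
  finally show "h \<in> int ` {h. h < nat \<lfloor>real_of_int K * ln x\<rfloor> + 1 \<and>
            card {t\<in>{1..T}. h mod p t < J} \<le> J * J}" using hh hlt by blast
qed




lemma ln_bounds_p:
  fixes q :: real
  assumes "2 \<le> q"
  shows "1/q \<le> - ln (1 - 1/q)" "- ln (1 - 1/q) \<le> 1/q + (1/q) / (q - 1)"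
proof -
  have q0: "0 < 1 - 1/q" using assms by (simp add: field_simps)
  have "ln (1 - 1/q) \<le> (1 - 1/q) - 1" by (rule ln_le_minus_one[OF q0])
  thus "1/q \<le> - ln (1 - 1/q)" by simp
  have e: "- ln (1 - 1/q) = ln (q / (q - 1))"
  proof -
    have "1 - 1/q = (q-1)/q" using assms by (simp add: field_simps)
    moreover have "q/(q-1) = inverse ((q-1)/q)" by simp
    ultimately show ?thesis by (simp only: ln_inverse)
  qed
  have "ln (q / (q - 1)) \<le> q/(q-1) - 1" by (rule ln_le_minus_one) (use assms in simp)
  also have "q/(q-1) - 1 = 1/q + (1/q) / (q - 1)" using assms by (simp add: field_simps)
  finally show "- ln (1 - 1/q) \<le> 1/q + (1/q) / (q - 1)" using e by simp
qed

lemma ln2_le1: "ln (2::real) \<le> 1"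
proof -
  have "2 \<le> exp (1::real)" using exp_ge_add_one_self[of 1] by simp
  hence "ln 2 \<le> ln (exp (1::real))" by (subst ln_le_cancel_iff) auto
  thus ?thesis by simp
qed



lemma det_bound:
  fixes K :: int and x Q Y :: real and M L T :: nat and p :: "nat \<Rightarrow> nat"
  assumes M: "1 \<le> M" and L: "1 \<le> L" and lQ: "1 < ln Q"
    and u1: "1 \<le> ln (ln Q)" and lam2: "2 \<le> ln (ln Q) / (real M * real L)"
    and hp: "\<forall>t\<in>{1..T}. prime (p t) \<and> Y \<le> real (p t) \<and> real (p t) \<le> Q"
    and Y: "real (2*M*L^2) + ln (ln Q) / (real M * real L) + 2 \<le> Y"
    and inj: "inj_on p {1..T}" and TJ: "(2*M*L^2)^2 \<le> T"
    and Pl: "(1/2) * (ln Q) powr (1 / (real M * real L)) \<le> (\<Prod>t\<in>{1..T}. inverse (1 - 1 / real (p t)))"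
    and Pu: "(\<Prod>t\<in>{1..T}. inverse (1 - 1 / real (p t))) \<le> (3/2) * (ln Q) powr (1 / (real M * real L))"
    and N1: "1 \<le> real_of_int K * ln x"
    and err: "real (2 * nat \<lceil>9 * real (2*M*L^2) * (ln (ln Q) / (real M * real L) + 1)\<rceil> + 1)
        * (Q * real (2*M*L^2)) ^ (2 * nat \<lceil>9 * real (2*M*L^2) * (ln (ln Q) / (real M * real L) + 1)\<rceil> + 1)
        * exp (real (2*M*L^2) * (ln (ln Q) / (real M * real L))) \<le> real_of_int K * ln x"
  shows "real (card (Hset K x M L p T)) \<le>
          3 * ((16 * real M * real L^2) ^ (8 * M^2 * L^4) * (ln (ln Q)) ^ (4 * M^2 * L^4)
               / (ln Q) ^ (2 * L)) * (real_of_int K * ln x)"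
proof -
  define J where "J = 2*M*L^2"
  define u where "u = ln (ln Q)"
  define lam where "lam = u / (real M * real L)"
  define N where "N = real_of_int K * ln x"
  define n0 where "n0 = 2 * nat \<lceil>9 * real J * (lam + 1)\<rceil> + 1"
  define A where "A = {1..T}"
  define z where "z = 1 / u"
  define N0 where "N0 = nat \<lfloor>N\<rfloor> + 1"
  have J1: "2 \<le> J" unfolding J_def using M L by simp
  have u1': "1 \<le> u" using u1 unfolding u_def .
  have lam2': "2 \<le> lam" using lam2 unfolding lam_def u_def .
  have N1': "1 \<le> N" using N1 unfolding N_def .
  have Yb: "real J + lam + 2 \<le> Y" using Y unfolding J_def lam_def u_def by simp
  have finA: "finite A" unfolding A_def by simp
  have pge2: "2 \<le> real (p t)" if "t \<in> A" for t
    using hp that prime_ge_2_nat[of "p t"] unfolding A_def by fastforce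
  have pY: "Y \<le> real (p t)" "real (p t) \<le> Q" if "t \<in> A" for t using hp that unfolding A_def by auto
  have Jlam: "real J * lam = 2 * real L * u"
    unfolding J_def lam_def using M L by (simp add: field_simps power2_eq_square)
  have zlam: "real J * (z * lam) = 2 * real L"
    unfolding z_def using Jlam u1' by (simp add: field_simps)
  define Pi where "Pi = (\<Prod>t\<in>A. inverse (1 - 1 / real (p t)))"
  define \<sigma> where "\<sigma> = (\<Sum>t\<in>A. 1 / real (p t))"
  have pw: "(ln Q) powr (1 / (real M * real L)) = exp lam"
    unfolding lam_def u_def powr_def using lQ by (simp add: field_simps)
  have lt1: "1 / real (p t) < 1" if "t \<in> A" for t using pge2[OF that] by simp
  have Pi_pos: "0 < Pi" unfolding Pi_def
    by (rule prod_pos) (use lt1 in auto)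
  have lnPi: "ln Pi = (\<Sum>t\<in>A. - ln (1 - 1 / real (p t)))"
  proof -
    have "ln Pi = (\<Sum>t\<in>A. ln (inverse (1 - 1/real (p t))))" unfolding Pi_def
      by (rule ln_prod[OF finA]) (use lt1 in fastforce)
    also have "\<dots> = (\<Sum>t\<in>A. - ln (1 - 1 / real (p t)))"
      by (rule sum.cong) (simp_all only: ln_inverse)
    finally show ?thesis .
  qed
  have sig_le: "\<sigma> \<le> ln Pi" unfolding lnPi \<sigma>_def
    by (rule sum_mono) (use pge2 ln_bounds_p in auto)
  have Pi_le: "ln Pi \<le> \<sigma> + \<sigma> / (Y - 1)"
  proof -
    have Y1: "1 < Y" using Yb J1 lam2' by simp
    have "ln Pi \<le> (\<Sum>t\<in>A. 1 / real (p t) + (1 / real (p t)) / (real (p t) - 1))"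
      unfolding lnPi by (rule sum_mono) (use pge2 ln_bounds_p in auto)
    also have "\<dots> \<le> (\<Sum>t\<in>A. 1 / real (p t) + (1 / real (p t)) / (Y - 1))"
    proof (rule sum_mono)
      fix t assume "t \<in> A"
      hence "Y - 1 \<le> real (p t) - 1" using pY by auto
      hence "(1 / real (p t)) / (real (p t) - 1) \<le> (1 / real (p t)) / (Y - 1)"
        using Y1 by (intro divide_left_mono) auto
      thus "1 / real (p t) + (1 / real (p t)) / (real (p t) - 1) \<le> 1 / real (p t) + (1 / real (p t)) / (Y - 1)"
        by simp
    qed
    also have "\<dots> = \<sigma> + \<sigma> / (Y - 1)" unfolding \<sigma>_def by (simp add: sum.distrib sum_divide_distrib)
    finally show ?thesis .
  qed
  have lnPi_up: "ln Pi \<le> lam + 1"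
  proof -
    have "ln Pi \<le> ln ((3/2) * exp lam)"
      using Pu Pi_pos unfolding Pi_def[symmetric] A_def[symmetric] pw by (subst ln_le_cancel_iff) auto
    also have "\<dots> = ln (3/2) + lam" by (subst ln_mult) auto
    also have "ln (3/2::real) \<le> ln 2" by (subst ln_le_cancel_iff) auto
    finally show ?thesis using ln2_le1 by linarith
  qed
  have lnPi_lo: "lam - 1 \<le> ln Pi"
  proof -
    have "ln ((1/2) * exp lam) \<le> ln Pi"
      using Pl Pi_pos unfolding Pi_def[symmetric] A_def[symmetric] pw by (subst ln_le_cancel_iff) auto
    moreover have "ln ((1/2) * exp lam) = lam - ln 2" by (subst ln_mult) (auto simp: ln_div)
    ultimately show ?thesis using ln2_le1 by linarith
  qed
  have sig_up: "\<sigma> \<le> lam + 1" using sig_le lnPi_up by linarith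
  have sig_lo: "lam - 2 \<le> \<sigma>"
  proof -
    have sig0: "0 \<le> \<sigma>" unfolding \<sigma>_def by (rule sum_nonneg) simp
    have "Y - 1 \<ge> lam + 1" using Yb J1 by simp
    hence "\<sigma> / (Y - 1) \<le> (lam + 1) / (lam + 1)" using sig_up sig0 lam2'
      by (intro frac_le) auto
    hence "\<sigma> / (Y - 1) \<le> 1" using lam2' by simp
    thus ?thesis using Pi_le lnPi_lo by linarith
  qed
  have sig0: "0 \<le> \<sigma>" unfolding \<sigma>_def by (rule sum_nonneg) simp
  have z: "0 < z" "z \<le> 1" unfolding z_def using u1' by auto
  have n0odd: "odd n0" unfolding n0_def by simp
  have JpA: "\<forall>t\<in>A. prime (p t) \<and> J \<le> p t"
  proof
    fix t assume t: "t \<in> A"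
    have "real J \<le> real (p t)" using Yb pY(1)[OF t] lam2' by linarith
    thus "prime (p t) \<and> J \<le> p t" using hp t unfolding A_def by auto
  qed
  have injA: "inj_on p A" using inj unfolding A_def .
  define G where "G = {h. h < N0 \<and> card {t\<in>A. h mod p t < J} \<le> J * J}"
  have cardH: "card (Hset K x M L p T) \<le> card G"
  proof -
    have "Hset K x M L p T \<subseteq> int ` G"
      using Hset_sub[of T p J M L K x] hp inj unfolding G_def N0_def N_def A_def J_def by auto
    hence "card (Hset K x M L p T) \<le> card (int ` G)"
      by (rule card_mono[rotated]) (simp add: G_def)
    also have "\<dots> \<le> card G" by (rule card_image_le) (simp add: G_def)
    finally show ?thesis .
  qed
  define y where "y t = (1 - z) * real J / real (p t)" for t
  have core: "real (card G) \<le> (1/z)^(J*J) * (real N0 * ((\<Prod>t\<in>A. 1 - y t) + esym y A n0)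
      + (\<Sum>i<n0. real (card {S. S \<subseteq> A \<and> card S = i}) * real J ^ i))"
    using sieve_core[OF finA JpA injA z n0odd, of N0 "J*J"] unfolding G_def y_def .
  have sumy: "(\<Sum>t\<in>A. y t) = (1 - z) * real J * \<sigma>"
    unfolding y_def \<sigma>_def by (simp add: sum_distrib_left)
  have prod_b: "(\<Prod>t\<in>A. 1 - y t) \<le> exp (- (real J * lam)) * exp (2 * real L + 2 * real J)"
  proof -
    have "(\<Prod>t\<in>A. 1 - y t) \<le> (\<Prod>t\<in>A. exp (- y t))"
    proof (rule prod_mono)
      fix t assume t: "t \<in> A"
      have "y t \<le> 1"
      proof -
        have "(1 - z) * real J \<le> 1 * real (p t)"
          using z JpA t by (intro mult_mono) auto
        thus ?thesis unfolding y_def using pge2[OF t] by (simp add: field_simps)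
      qed
      thus "0 \<le> 1 - y t \<and> 1 - y t \<le> exp (- y t)"
        using exp_ge_add_one_self[of "- y t"] by simp
    qed
    also have "\<dots> = exp (- (1 - z) * real J * \<sigma>)"
      by (simp add: exp_sum[OF finA, symmetric] sum_negf sumy algebra_simps)
    also have "\<dots> \<le> exp (- (real J * lam) + (2 * real L + 2 * real J))"
    proof -
      have "(1 - z) * (lam - 2) \<le> (1 - z) * \<sigma>" using sig_lo z by (intro mult_left_mono) auto
      hence "real J * ((1 - z) * (lam - 2)) \<le> real J * ((1 - z) * \<sigma>)" by (rule mult_left_mono) auto
      moreover have "real J * ((1 - z) * (lam - 2)) = real J * lam - real J * (z * lam) - 2 * real J + 2 * real J * z"
        by (simp add: algebra_simps)
      moreover have "0 \<le> 2 * real J * z" using z by simp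
      ultimately show ?thesis using zlam by (simp add: algebra_simps)
    qed
    also have "\<dots> = exp (- (real J * lam)) * exp (2 * real L + 2 * real J)"
      by (rule exp_add)
    finally show ?thesis .
  qed
  have esym_b: "esym y A n0 \<le> exp (- (real J * lam))"
  proof -
    define s where "s = real J * (lam + 1)"
    have s0: "0 \<le> s" unfolding s_def using lam2' by simp
    have y0: "0 \<le> y t" if "t \<in> A" for t unfolding y_def using z by simp
    have "(\<Sum>t\<in>A. y t) \<le> s" unfolding sumy s_def
    proof -
      have "(1 - z) * \<sigma> \<le> 1 * (lam + 1)" using z sig0 sig_up by (intro mult_mono) auto
      hence "real J * ((1 - z) * \<sigma>) \<le> real J * (lam + 1)" by (intro mult_left_mono) auto
      thus "(1 - z) * real J * \<sigma> \<le> real J * (lam + 1)" by (simp add: algebra_simps)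
    qed
    hence "(\<Sum>t\<in>A. y t) ^ n0 \<le> s ^ n0"
      by (intro power_mono) (auto intro: sum_nonneg y0)
    hence e1: "esym y A n0 * fact n0 \<le> s ^ n0" using esym_le[OF finA, of y n0] y0 by auto
    have e2: "s ^ n0 / fact n0 \<le> exp (8 * s) / 8 ^ n0"
    proof -
      have "(8 * s) ^ n0 / fact n0 \<le> exp (8 * s)" by (rule pow_fact_le_exp) (use s0 in simp)
      thus ?thesis by (simp add: power_mult_distrib field_simps)
    qed
    have e3: "exp (8 * s) / 8 ^ n0 \<le> exp (- (real J * lam))"
    proof -
      have "real n0 \<ge> 18 * real J * (lam + 1)"
      proof -
        have "real (nat \<lceil>9 * real J * (lam + 1)\<rceil>) \<ge> 9 * real J * (lam + 1)"
          by linarith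
        thus ?thesis unfolding n0_def by simp
      qed
      hence "8 * s + real J * lam \<le> real n0" unfolding s_def using lam2' by (simp add: algebra_simps)
      hence "exp (8 * s + real J * lam) \<le> exp (real n0)" by simp
      also have "exp (real n0) = exp 1 ^ n0" by (simp add: exp_of_nat_mult[symmetric])
      also have "\<dots> \<le> 8 ^ n0" using exp_le by (intro power_mono) auto
      finally have "exp (8 * s) * exp (real J * lam) \<le> 8 ^ n0" by (simp add: exp_add)
      thus ?thesis by (simp add: field_simps exp_minus)
    qed
    have "esym y A n0 \<le> s ^ n0 / fact n0" using e1 by (simp add: field_simps)
    thus ?thesis using e2 e3 by linarith
  qed
  have JT: "J^2 \<le> T" using TJ unfolding J_def .
  have "1 \<le> J^2" using J1 by simp
  hence Tpos: "0 < T" using JT by linarith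
  have TQ: "real T \<le> Q"
  proof -
    have "p ` A \<subseteq> {1..nat \<lfloor>Q\<rfloor>}"
    proof
      fix q assume "q \<in> p ` A"
      then obtain t where t: "t \<in> A" "q = p t" by auto
      have "real (p t) \<le> Q" using pY(2)[OF t(1)] .
      hence "p t \<le> nat \<lfloor>Q\<rfloor>" by linarith
      moreover have "1 \<le> p t" using pge2[OF t(1)] by simp
      ultimately show "q \<in> {1..nat \<lfloor>Q\<rfloor>}" using t by simp
    qed
    hence "card (p ` A) \<le> nat \<lfloor>Q\<rfloor>" using card_mono[of "{1..nat \<lfloor>Q\<rfloor>}"] by fastforce
    moreover have "card (p ` A) = T" using card_image[OF injA] unfolding A_def by simp
    ultimately have "T \<le> nat \<lfloor>Q\<rfloor>" by simp
    moreover have "0 < T" using Tpos .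
    ultimately show ?thesis by linarith
  qed
  have err_b: "(\<Sum>i<n0. real (card {S. S \<subseteq> A \<and> card S = i}) * real J ^ i) \<le> N * exp (- (real J * lam))"
  proof -
    have "1 \<le> T * J" using Tpos J1 by (simp add: Suc_le_eq)
    hence TJ1: "1 \<le> real T * real J" by (metis of_nat_1 of_nat_le_iff of_nat_mult)
    have "(\<Sum>i<n0. real (card {S. S \<subseteq> A \<and> card S = i}) * real J ^ i) \<le> (\<Sum>i<n0. (real T * real J) ^ n0)"
    proof (rule sum_mono)
      fix i assume i: "i \<in> {..<n0}"
      have "card {S. S \<subseteq> A \<and> card S = i} = T choose i" using n_subsets[OF finA, of i] unfolding A_def by simp
      moreover have "T choose i \<le> T ^ i"
        by (cases "i \<le> T") (auto simp: binomial_le_pow binomial_eq_0)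
      ultimately have "real (card {S. S \<subseteq> A \<and> card S = i}) \<le> real T ^ i" by (metis of_nat_le_iff of_nat_power)
      hence "real (card {S. S \<subseteq> A \<and> card S = i}) * real J ^ i \<le> real T ^ i * real J ^ i"
        by (intro mult_right_mono) auto
      also have "\<dots> = (real T * real J) ^ i" by (simp add: power_mult_distrib)
      also have "\<dots> \<le> (real T * real J) ^ n0" using i TJ1 by (intro power_increasing) auto
      finally show "real (card {S. S \<subseteq> A \<and> card S = i}) * real J ^ i \<le> (real T * real J) ^ n0" .
    qed
    also have "\<dots> = real n0 * (real T * real J) ^ n0" by simp
    also have "\<dots> \<le> real n0 * (Q * real J) ^ n0"
      using TQ by (intro mult_left_mono power_mono mult_right_mono) auto
    also have "\<dots> \<le> N * exp (- (real J * lam))"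
    proof -
      have "real n0 * (Q * real J) ^ n0 * exp (real J * lam) \<le> N"
        using err unfolding N_def n0_def J_def lam_def u_def by simp
      thus ?thesis by (simp add: exp_minus field_simps)
    qed
    finally show ?thesis .
  qed
  have yA: "0 \<le> y t \<and> y t \<le> 1" if t: "t \<in> A" for t
  proof -
    have "(1 - z) * real J \<le> 1 * real (p t)"
      using z JpA t by (intro mult_mono) auto
    moreover have "0 \<le> (1 - z) * real J" using z by simp
    ultimately show ?thesis unfolding y_def using pge2[OF t] by (simp add: divide_le_eq_1)
  qed
  have prod0: "0 \<le> (\<Prod>t\<in>A. 1 - y t)" by (rule prod_nonneg) (use yA in auto)
  have esym0: "0 \<le> esym y A n0" unfolding esym_def
  proof (rule sum_nonneg)
    fix S assume "S \<in> {S. S \<subseteq> A \<and> card S = n0}"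
    thus "0 \<le> (\<Prod>t\<in>S. y t)" using yA by (intro prod_nonneg) auto
  qed
  have N0b: "real N0 \<le> 2 * N" unfolding N0_def using N1' by linarith
  define E where "E = exp (- (real J * lam))"
  have E0: "0 \<le> E" unfolding E_def by simp
  have "real (card G) \<le> u ^ (J*J) * (2 * N * (E * exp (2 * real L + 2 * real J) + E) + N * E)"
  proof -
    have "real N0 * ((\<Prod>t\<in>A. 1 - y t) + esym y A n0) \<le> 2 * N * (E * exp (2 * real L + 2 * real J) + E)"
      using N0b prod_b esym_b unfolding E_def
      by (intro mult_mono add_mono) (auto intro!: add_nonneg_nonneg prod0 esym0)
    hence "real N0 * ((\<Prod>t\<in>A. 1 - y t) + esym y A n0)
      + (\<Sum>i<n0. real (card {S. S \<subseteq> A \<and> card S = i}) * real J ^ i)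
      \<le> 2 * N * (E * exp (2 * real L + 2 * real J) + E) + N * E" using err_b unfolding E_def by linarith
    moreover have "(1/z)^(J*J) = u ^ (J*J)" unfolding z_def by simp
    moreover have "0 \<le> u ^ (J*J)" using u1' by simp
    ultimately have "(1/z)^(J*J) * (real N0 * ((\<Prod>t\<in>A. 1 - y t) + esym y A n0)
      + (\<Sum>i<n0. real (card {S. S \<subseteq> A \<and> card S = i}) * real J ^ i))
      \<le> u ^ (J*J) * (2 * N * (E * exp (2 * real L + 2 * real J) + E) + N * E)"
      by (simp add: mult_left_mono)
    thus ?thesis using core by linarith
  qed
  also have "\<dots> = u ^ (J*J) * N * E * (2 * exp (2 * real L + 2 * real J) + 3)" by (simp add: algebra_simps)
  also have "\<dots> \<le> u ^ (J*J) * N * E * (3 * (8 * real J) ^ (2*J*J))"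
  proof -
    have "exp (2 * real L + 2 * real J) \<le> exp (4 * real J)"
    proof -
      have "1 * L \<le> (2*M*L) * L" by (rule mult_right_mono) (use M L in auto)
      hence "L \<le> J" unfolding J_def by (simp add: power2_eq_square mult.assoc)
      hence "real L \<le> real J" by simp
      thus ?thesis by simp
    qed
    also have "exp (4 * real J) = exp 1 ^ (4 * J)" by (simp add: exp_of_nat_mult[symmetric])
    also have "\<dots> \<le> 3 ^ (4 * J)" using exp_le by (intro power_mono) auto
    also have "\<dots> = 81 ^ J" by (simp add: power_mult)
    finally have a: "exp (2 * real L + 2 * real J) \<le> 81 ^ J" .
    have b: "3 * (81::real) ^ J \<le> 256 ^ J"
    proof -
      obtain j where j: "J = Suc j" using J1 by (cases J) auto
      have "(81::real) ^ j \<le> 256 ^ j" by (intro power_mono) auto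
      moreover have "0 \<le> (81::real) ^ j" by simp
      ultimately have "243 * (81::real) ^ j \<le> 256 * 256 ^ j" by linarith
      thus ?thesis unfolding j by simp
    qed
    have c: "(256::real) ^ J \<le> (8 * real J) ^ (2*J*J)"
    proof -
      have "(256::real) ^ J = 16 ^ (2*J)" by (simp add: power_mult)
      also have "\<dots> \<le> (8 * real J) ^ (2*J)" using J1 by (intro power_mono) auto
      also have "\<dots> \<le> (8 * real J) ^ (2*J*J)" using J1 by (intro power_increasing) auto
      finally show ?thesis .
    qed
    have "2 * exp (2 * real L + 2 * real J) + 3 \<le> 3 * (8 * real J) ^ (2*J*J)"
    proof -
      have "1 \<le> (81::real) ^ J" by simp
      thus ?thesis using a b c by linarith
    qed
    moreover have "0 \<le> u ^ (J*J) * N * E" using u1' N1' E0 by simp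
    ultimately show ?thesis by (intro mult_left_mono) auto
  qed
  finally have fin: "real (card G) \<le> 3 * ((8 * real J) ^ (2*J*J) * u ^ (J*J) / exp (real J * lam)) * N"
    unfolding E_def by (simp add: exp_minus field_simps)
  have ex1: "8 * M^2 * L^4 = 2*J*J" unfolding J_def by (simp add: eval_nat_numeral algebra_simps)
  have ex2: "4 * M^2 * L^4 = J*J" unfolding J_def by (simp add: eval_nat_numeral algebra_simps)
  have ex3: "16 * real M * real L^2 = 8 * real J" unfolding J_def by simp
  have e1: "(16 * real M * real L^2) ^ (8 * M^2 * L^4) = (8 * real J) ^ (2*J*J)"
    unfolding ex1 ex3 ..
  have e2: "(ln (ln Q)) ^ (4 * M^2 * L^4) = u ^ (J*J)"
    unfolding ex2 u_def ..
  have e3: "(ln Q) ^ (2 * L) = exp (real J * lam)"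
  proof -
    have "(ln Q) ^ (2 * L) = exp u ^ (2 * L)" unfolding u_def using lQ by simp
    also have "\<dots> = exp (real J * lam)" unfolding Jlam by (simp add: exp_of_nat_mult[symmetric] algebra_simps)
    finally show ?thesis .
  qed
  have "real (card (Hset K x M L p T)) \<le> real (card G)" using cardH by simp
  thus ?thesis using fin unfolding e1 e2 e3 N_def by linarith
qed



lemma asym:
  fixes eps x :: real and M :: nat and K :: int
  assumes eps: "0 < eps" "eps < 1/6" and M: "1 \<le> M" and K: "2 \<le> K"
   and x: "exp (exp (exp (512 * real M^4 + 72000 * real M^2 / eps^4 + 2))) \<le> x"
  shows "1 \<le> Lpar eps x" "1 < ln (Qpar eps x)" "1 \<le> ln (ln (Qpar eps x))"
    "2 \<le> ln (ln (Qpar eps x)) / (real M * real (Lpar eps x))"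
    "real (2*M*(Lpar eps x)^2) + ln (ln (Qpar eps x)) / (real M * real (Lpar eps x)) + 2
       \<le> exp ((ln (Qpar eps x)) powr (4 / (real M * real (Lpar eps x))))"
    "1 \<le> real_of_int K * ln x"
    "real (2 * nat \<lceil>9 * real (2*M*(Lpar eps x)^2) * (ln (ln (Qpar eps x)) / (real M * real (Lpar eps x)) + 1)\<rceil> + 1)
        * (Qpar eps x * real (2*M*(Lpar eps x)^2)) ^ (2 * nat \<lceil>9 * real (2*M*(Lpar eps x)^2) * (ln (ln (Qpar eps x)) / (real M * real (Lpar eps x)) + 1)\<rceil> + 1)
        * exp (real (2*M*(Lpar eps x)^2) * (ln (ln (Qpar eps x)) / (real M * real (Lpar eps x)))) \<le> real_of_int K * ln x"
proof -
  define L where "L = Lpar eps x"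
  define Q where "Q = Qpar eps x"
  define v0 where "v0 = 512 * real M^4 + 72000 * real M^2 / eps^4 + 2"
  define v where "v = ln (ln (ln x))"
  have M1: "1 \<le> real M" using M by simp
  have v0_2: "2 \<le> v0" unfolding v0_def using eps by simp
  have x0: "0 < x" using x by (smt (verit) exp_gt_zero)
  have lx: "exp (exp v0) \<le> ln x" using x x0 unfolding v0_def by (simp add: ln_ge_iff)
  have lx0: "0 < ln x" using lx by (smt (verit) exp_gt_zero)
  have llx: "exp v0 \<le> ln (ln x)" using lx lx0 by (simp add: ln_ge_iff)
  have llx0: "0 < ln (ln x)" using llx by (smt (verit) exp_gt_zero)
  have vv0: "v0 \<le> v" unfolding v_def using llx llx0 by (simp add: ln_ge_iff)
  have v2: "2 \<le> v" using vv0 v0_2 by simp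
  have llx_eq: "ln (ln x) = exp v" unfolding v_def using llx0 by simp
  have lx_eq: "ln x = exp (exp v)" using llx_eq lx0 by (metis exp_ln)
  have lnQ: "ln Q = exp ((1 - eps) * v)"
    unfolding Q_def Qpar_def using llx0 by (simp add: powr_def llx_eq)
  define u where "u = (1 - eps) * v"
  have lnlnQ: "ln (ln Q) = u" unfolding lnQ u_def by simp
  have "eps * v \<le> (1/6) * v" using eps v2 by (intro mult_right_mono) auto
  hence u_ge: "5/6 * v \<le> u" unfolding u_def by (simp add: algebra_simps)
  have "0 \<le> eps * v" using eps v2 by simp
  hence u_le: "u \<le> v" unfolding u_def by (simp add: algebra_simps)
  have u1: "1 \<le> u" using u_ge v2 by linarith
  show "1 \<le> Lpar eps x" unfolding Lpar_def by simp
  show "1 < ln (Qpar eps x)" using lnQ u1 unfolding Q_def u_def by simp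
  show "1 \<le> ln (ln (Qpar eps x))" using lnlnQ u1 unfolding Q_def by simp
  define a where "a = v powr (1/3)"
  have a1: "1 \<le> a" unfolding a_def using v2 by (intro ge_one_powr_ge_zero) auto
  have a3: "a ^ 3 = v" unfolding a_def using v2 by (simp add: powr_realpow[symmetric] powr_powr)
  have L1: "1 \<le> real L" unfolding L_def Lpar_def by simp
  have La: "real L \<le> 2 * a"
  proof -
    have "v powr (1/3 - eps) \<le> v powr (1/3)" using eps v2 by (intro powr_mono) auto
    moreover have "0 \<le> v powr (1/3 - eps)" by simp
    moreover have "real L \<le> v powr (1/3 - eps) + 1" unfolding L_def Lpar_def v_def
      by (simp add: of_nat_nat)
    ultimately show ?thesis using a1 unfolding a_def by linarith
  qed
  have "a^2 \<le> a^3" by (rule power_increasing) (use a1 in auto)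
  hence a2v: "a^2 \<le> v" using a3 by simp
  define lam where "lam = u / (real M * real L)"
  have "1 * 1 \<le> real M * real L" using M1 L1 by (intro mult_mono) auto
  hence ML1: "1 \<le> real M * real L" by simp
  have "u / (real M * real L) \<le> u / 1" by (rule divide_left_mono) (use ML1 u1 in auto)
  hence lam_le: "lam \<le> v" unfolding lam_def using u_le by simp
  have lam_ge: "a^2 / (3 * real M) \<le> lam"
  proof -
    have "real M * real L \<le> real M * (2 * a)" using La M1 by (intro mult_left_mono) auto
    moreover have "0 < (real M * (2 * a)) * (real M * real L)" using M1 a1 L1 by simp
    ultimately have "u / (real M * (2 * a)) \<le> lam" unfolding lam_def using ML1 u1
      by (intro divide_left_mono) auto
    moreover have "a^2 / (3 * real M) \<le> u / (real M * (2 * a))"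
    proof -
      have eqv: "a^2 * (real M * (2 * a)) = real M * (2 * v)" using a3 by (simp add: power3_eq_cube power2_eq_square algebra_simps)
      have "2 * v \<le> 3 * u" using u_ge v2 by linarith
      hence "real M * (2 * v) \<le> real M * (3 * u)" by (intro mult_left_mono) auto
      hence "a^2 * (real M * (2 * a)) \<le> u * (3 * real M)" unfolding eqv by (simp add: algebra_simps)
      thus ?thesis using M1 a1 by (simp add: divide_le_eq le_divide_eq algebra_simps)
    qed
    ultimately show ?thesis by linarith
  qed
  have a8M: "8 * real M \<le> a"
  proof -
    have "(8 * real M)^3 = 512 * real M^3" by (simp add: power_mult_distrib)
    also have "\<dots> \<le> 512 * real M^4" using M1 by (intro mult_left_mono power_increasing) auto
    also have "\<dots> \<le> v"
    proof -
      have "0 \<le> 72000 * real M^2 / eps^4" by simp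
      thus ?thesis using vv0 unfolding v0_def by linarith
    qed
    finally have "(8 * real M)^3 \<le> a^3" using a3 by simp
    moreover have "(3::nat) = Suc 2" by simp
    ultimately have "(8 * real M)^Suc 2 \<le> a^Suc 2" by metis
    moreover have "0 \<le> a" using a1 by simp
    ultimately show ?thesis by (rule power_le_imp_le_base)
  qed
  have lam2: "2 \<le> lam"
  proof -
    have "8 * real M * 1 \<le> a * a" using a8M a1 M1 by (intro mult_mono) auto
    hence "6 * real M \<le> a^2" using M1 by (simp add: power2_eq_square)
    hence "2 \<le> a^2 / (3 * real M)" using M1 by (simp add: le_divide_eq)
    thus ?thesis using lam_ge by linarith
  qed
  show "2 \<le> ln (ln (Qpar eps x)) / (real M * real (Lpar eps x))"
    using lam2 unfolding lam_def lnlnQ[unfolded Q_def] L_def .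
  define J where "J = 2*M*L^2"
  have Ja: "real J \<le> 8 * real M * a^2"
  proof -
    have "real L ^ 2 \<le> (2 * a)^2" using La L1 by (intro power_mono) auto
    hence "real M * real L ^ 2 \<le> real M * (4 * a^2)" by (intro mult_left_mono) (auto simp: power_mult_distrib)
    thus ?thesis unfolding J_def by simp
  qed
  have "8 * real M * a^2 \<le> 8 * real M * v" using a2v by (intro mult_left_mono) auto
  hence Jv: "real J \<le> 8 * real M * v" using Ja by linarith
  have "1 \<le> L" unfolding L_def Lpar_def by simp
  hence "1 \<le> J" unfolding J_def using M by (simp add: Suc_le_eq)
  hence J1: "1 \<le> real J" by simp
  have powr4: "(ln Q) powr (4 / (real M * real L)) = exp (4 * lam)"
    unfolding powr_def lam_def using lnQ lnlnQ by (simp add: field_simps)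
  have "real J + lam + 2 \<le> 11 * real M * a^3"
  proof -
    have "8 * real M * a^2 \<le> 8 * real M * a^3" using a1 M1
      by (intro mult_left_mono power_increasing) auto
    moreover have "lam \<le> real M * a^3"
    proof -
      have "1 * a^3 \<le> real M * a^3" using M1 a1 by (intro mult_right_mono) auto
      thus ?thesis using lam_le a3 by simp
    qed
    moreover have "2 \<le> 2 * real M * a^3"
    proof -
      have "1 \<le> a^3" using a1 by simp
      hence "1 * 1 \<le> real M * a^3" using M1 by (intro mult_mono) auto
      thus ?thesis by simp
    qed
    ultimately show ?thesis using Ja by linarith
  qed
  also have "\<dots> \<le> (4 * lam)^3 / 6"
  proof -
    define b where "b = a^2 / (3 * real M)"
    have b0: "0 \<le> b" unfolding b_def by simp
    have "(4 * b)^3 \<le> (4 * lam)^3" using b0 lam_ge unfolding b_def by (intro power_mono) auto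
    moreover have "(4 * b)^3 / 6 = 32 * v^2 / (81 * real M^3)"
    proof -
      have "(4*b)^3 = 64 * (a^3)^2 / (27 * real M^3)" unfolding b_def
        by (simp add: power_mult_distrib power_divide power_mult[symmetric] field_simps)
      thus ?thesis using a3 by simp
    qed
    moreover have "11 * real M * a^3 \<le> 32 * v^2 / (81 * real M^3)"
    proof -
      have "891 * real M^4 \<le> 32 * v"
      proof -
        have "0 \<le> 72000 * real M^2 / eps^4" "0 \<le> real M^4" by simp_all
        thus ?thesis using vv0 unfolding v0_def by linarith
      qed
      hence "891 * real M^4 * v \<le> 32 * v * v" using v2 by (intro mult_right_mono) auto
      hence "11 * real M * v * (81 * real M^3) \<le> 32 * v^2"
        by (simp add: power2_eq_square power4_eq_xxxx power3_eq_cube algebra_simps)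
      thus ?thesis using a3 M1 by (simp add: le_divide_eq)
    qed
    ultimately show ?thesis by (smt (verit) divide_right_mono)
  qed
  also have "\<dots> \<le> exp (4 * lam)" using pow_fact_le_exp[of "4 * lam" 3] lam2 by (simp add: fact_numeral)
  also have "\<dots> \<le> exp (exp (4 * lam))"
  proof -
    have "4*lam \<le> exp (4*lam)" using exp_ge_add_one_self[of "4*lam"] by linarith
    thus ?thesis by simp
  qed
  finally show "real (2*M*(Lpar eps x)^2) + ln (ln (Qpar eps x)) / (real M * real (Lpar eps x)) + 2
       \<le> exp ((ln (Qpar eps x)) powr (4 / (real M * real (Lpar eps x))))"
    unfolding powr4[unfolded Q_def L_def] J_def L_def lam_def lnlnQ[unfolded Q_def] .
  have lx1: "1 \<le> ln x" unfolding lx_eq by simp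
  show "1 \<le> real_of_int K * ln x"
  proof -
    have "1 * 1 \<le> real_of_int K * ln x" using K lx1 by (intro mult_mono) auto
    thus ?thesis by simp
  qed
  define n0 where "n0 = 2 * nat \<lceil>9 * real J * (lam + 1)\<rceil> + 1"
  have "1 * 1 \<le> real M * v" using M1 v2 by (intro mult_mono) auto
  hence Mv1: "1 \<le> real M * v" by simp
  have n0_le: "real n0 \<le> 291 * real M * v^2"
  proof -
    have t0: "0 \<le> 9 * real J * (lam + 1)" using lam2 by simp
    have "real n0 \<le> 2 * (9 * real J * (lam + 1)) + 3" unfolding n0_def using t0 by linarith
    also have "9 * real J * (lam + 1) \<le> 9 * (8 * real M * v) * (v + 1)"
      using Jv lam_le J1 lam2 by (intro mult_mono) auto
    also have "9 * (8 * real M * v) * (v + 1) \<le> 9 * (8 * real M * v) * (2 * v)"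
      using M1 v2 by (intro mult_left_mono) auto
    finally have "real n0 \<le> 288 * (real M * v^2) + 3" by (simp add: power2_eq_square algebra_simps)
    moreover have "1 \<le> real M * v^2"
    proof -
      have "1 * 1 \<le> real M * v^2" using M1 v2 by (intro mult_mono) (auto simp: power2_eq_square intro: order_trans[of _ v])
      thus ?thesis by simp
    qed
    ultimately show ?thesis by linarith
  qed
  have n01: "1 \<le> real n0" unfolding n0_def by simp
  define E where "E = exp ((1 - eps) * v)"
  have E1: "1 \<le> E" unfolding E_def using eps v2 by simp
  have Q0: "0 < Q" unfolding Q_def Qpar_def by simp
  have lnQE: "ln Q = E" unfolding E_def using lnQ .
  define X where "X = ln (real n0) + real n0 * ln (Q * real J) + real J * lam"
  have LHS: "real n0 * (Q * real J) ^ n0 * exp (real J * lam) = exp X"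
  proof -
    have qj: "0 < Q * real J" using Q0 J1 by simp
    have "(Q * real J) ^ n0 = exp (ln (Q * real J)) ^ n0" using qj by simp
    also have "\<dots> = exp (real n0 * ln (Q * real J))" by (rule exp_of_nat_mult[symmetric])
    finally have "(Q * real J) ^ n0 = exp (real n0 * ln (Q * real J))" .
    moreover have "real n0 = exp (ln (real n0))" using n01 by simp
    ultimately show ?thesis unfolding X_def by (simp add: exp_add)
  qed
  have X_le: "X \<le> 3000 * real M^2 * v^3 * E"
  proof -
    have "ln (real n0) \<le> real n0" using ln_le_minus_one[of "real n0"] n01 by linarith
    moreover have "ln (Q * real J) \<le> E + real J"
    proof -
      have "ln (Q * real J) = ln Q + ln (real J)" using Q0 J1 by (simp add: ln_mult)
      moreover have "ln (real J) \<le> real J" using ln_le_minus_one[of "real J"] J1 by linarith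
      ultimately show ?thesis using lnQE by simp
    qed
    hence "real n0 * ln (Q * real J) \<le> real n0 * (E + real J)" using n01 by (intro mult_left_mono) auto
    moreover have "real J * lam \<le> real J * v" using lam_le J1 by (intro mult_left_mono) auto
    ultimately have "X \<le> real n0 * (1 + E + real J) + real J * v" unfolding X_def by (simp add: algebra_simps)
    also have "\<dots> \<le> (291 * real M * v^2) * (10 * (real M * v * E)) + 8 * real M^2 * v^3 * E"
    proof -
      have "1 * 1 \<le> (real M * v) * E" using Mv1 E1 by (intro mult_mono) auto
      hence W1: "1 \<le> real M * v * E" by simp
      have "1 * E \<le> (real M * v) * E" using Mv1 E1 by (intro mult_right_mono) auto
      hence "E \<le> real M * v * E" by simp
      moreover have "(real M * v) * 1 \<le> (real M * v) * E" using Mv1 E1 by (intro mult_left_mono) auto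
      hence "8 * real M * v \<le> 8 * (real M * v * E)" by simp
      ultimately have "1 + E + real J \<le> 10 * (real M * v * E)" using Jv W1 by linarith
      hence a: "real n0 * (1 + E + real J) \<le> (291 * real M * v^2) * (10 * (real M * v * E))"
        using n0_le n01 E1 J1 by (intro mult_mono) auto
      have "real J * v \<le> (8 * real M * v) * v" using Jv v2 by (intro mult_right_mono) auto
      also have "\<dots> = ((8 * real M * v) * v) * 1" by simp
      also have "\<dots> \<le> ((8 * real M * v) * v) * (real M * v * E)" using W1 M1 v2
        by (intro mult_left_mono) auto
      finally have b: "real J * v \<le> 8 * real M^2 * v^3 * E" by (simp add: power2_eq_square power3_eq_cube algebra_simps)
      show ?thesis using a b by linarith
    qed
    also have "\<dots> = 2918 * real M^2 * v^3 * E" by (simp add: power2_eq_square power3_eq_cube algebra_simps)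
    also have "\<dots> \<le> 3000 * real M^2 * v^3 * E" using E1 v2 by (intro mult_right_mono) auto
    finally show ?thesis .
  qed
  have poly: "3000 * real M^2 * v^3 \<le> exp (eps * v)"
  proof -
    have "0 \<le> real M^4" by simp
    hence "72000 * real M^2 / eps^4 \<le> v" using vv0 unfolding v0_def by linarith
    hence "72000 * real M^2 \<le> v * eps^4" using eps by (simp add: divide_le_eq)
    hence "72000 * real M^2 * v^3 \<le> v * eps^4 * v^3" using v2 by (intro mult_right_mono) auto
    also have "\<dots> = (eps * v)^4" by (simp add: power_mult_distrib eval_nat_numeral algebra_simps)
    finally have "3000 * real M^2 * v^3 \<le> (eps * v)^4 / fact 4" by (simp add: fact_numeral)
    also have "\<dots> \<le> exp (eps * v)" using eps v2 by (intro pow_fact_le_exp) auto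
    finally show ?thesis .
  qed
  have "X \<le> exp v"
  proof -
    have "3000 * real M^2 * v^3 * E \<le> exp (eps * v) * E" using poly E1 by (intro mult_right_mono) auto
    also have "\<dots> = exp v" unfolding E_def by (simp add: exp_add[symmetric] algebra_simps)
    finally show ?thesis using X_le by linarith
  qed
  hence "exp X \<le> ln x" unfolding lx_eq by simp
  also have "ln x \<le> real_of_int K * ln x" using K lx1 by (simp add: mult_le_cancel_right1)
  finally have errL: "real n0 * (Q * real J) ^ n0 * exp (real J * lam) \<le> real_of_int K * ln x"
    unfolding LHS .
  show "real (2 * nat \<lceil>9 * real (2*M*(Lpar eps x)^2) * (ln (ln (Qpar eps x)) / (real M * real (Lpar eps x)) + 1)\<rceil> + 1)
        * (Qpar eps x * real (2*M*(Lpar eps x)^2)) ^ (2 * nat \<lceil>9 * real (2*M*(Lpar eps x)^2) * (ln (ln (Qpar eps x)) / (real M * real (Lpar eps x)) + 1)\<rceil> + 1)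
        * exp (real (2*M*(Lpar eps x)^2) * (ln (ln (Qpar eps x)) / (real M * real (Lpar eps x)))) \<le> real_of_int K * ln x"
    using errL unfolding n0_def J_def L_def lam_def lnlnQ[unfolded Q_def] Q_def .
qed



theorem lemma2p5:
  fixes K :: int
  assumes "K \<ge> 2"
  shows "\<exists>eps0>0. \<forall>eps. 0 < eps \<and> eps < eps0 \<longrightarrow>
    (\<exists>C>0. \<exists>x0. \<forall>x\<ge>x0. \<forall>(T::nat) (p::nat \<Rightarrow> nat).
      (let L = Lpar eps x; Q = Qpar eps x; M = Mpar K in
        (\<forall>t\<in>{1..T}. prime (p t) \<and>
            exp ((ln Q) powr (4 / (real M * real L))) \<le> real (p t) \<and> real (p t) \<le> Q) \<and>
        inj_on p {1..T} \<and>
        T \<ge> (2 * M * L^2)^2 \<and>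
        (1/2) * (ln Q) powr (1 / (real M * real L)) \<le> (\<Prod>t\<in>{1..T}. inverse (1 - 1 / real (p t))) \<and>
        (\<Prod>t\<in>{1..T}. inverse (1 - 1 / real (p t))) \<le> (3/2) * (ln Q) powr (1 / (real M * real L))
        \<longrightarrow>
        real (card (Hset K x M L p T)) \<le>
          C * ((16 * real M * real L^2) ^ (8 * M^2 * L^4) * (ln (ln Q)) ^ (4 * M^2 * L^4)
               / (ln Q) ^ (2 * L)) * (real_of_int K * ln x)))"
proof (rule exI[of _ "1/6"], intro conjI allI impI)
  show "(0::real) < 1/6" by simp
  fix eps :: real assume eps: "0 < eps \<and> eps < 1/6"
  define M where "M = Mpar K"
  have M1: "1 \<le> M" by (simp add: M_def Mpar_def)
  define x0 where "x0 = exp (exp (exp (512 * real M^4 + 72000 * real M^2 / eps^4 + 2)))"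
  have main: "\<exists>x0. \<forall>x\<ge>x0. \<forall>(T::nat) (p::nat \<Rightarrow> nat).
      (let L = Lpar eps x; Q = Qpar eps x; M = Mpar K in
        (\<forall>t\<in>{1..T}. prime (p t) \<and>
            exp ((ln Q) powr (4 / (real M * real L))) \<le> real (p t) \<and> real (p t) \<le> Q) \<and>
        inj_on p {1..T} \<and>
        T \<ge> (2 * M * L^2)^2 \<and>
        (1/2) * (ln Q) powr (1 / (real M * real L)) \<le> (\<Prod>t\<in>{1..T}. inverse (1 - 1 / real (p t))) \<and>
        (\<Prod>t\<in>{1..T}. inverse (1 - 1 / real (p t))) \<le> (3/2) * (ln Q) powr (1 / (real M * real L))
        \<longrightarrow>
        real (card (Hset K x M L p T)) \<le>
          3 * ((16 * real M * real L^2) ^ (8 * M^2 * L^4) * (ln (ln Q)) ^ (4 * M^2 * L^4)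
               / (ln Q) ^ (2 * L)) * (real_of_int K * ln x))"
  proof (rule exI[of _ x0], intro allI impI)
    fix x :: real and T :: nat and p :: "nat \<Rightarrow> nat"
    assume x: "x0 \<le> x"
    have xx: "exp (exp (exp (512 * real M^4 + 72000 * real M^2 / eps^4 + 2))) \<le> x"
      using x unfolding x0_def .
    have epsa: "0 < eps" "eps < 1/6" using eps by auto
    note as = asym[OF epsa M1 assms xx]
    show "let L = Lpar eps x; Q = Qpar eps x; M = Mpar K in
        (\<forall>t\<in>{1..T}. prime (p t) \<and>
            exp ((ln Q) powr (4 / (real M * real L))) \<le> real (p t) \<and> real (p t) \<le> Q) \<and>
        inj_on p {1..T} \<and>
        T \<ge> (2 * M * L^2)^2 \<and>
        (1/2) * (ln Q) powr (1 / (real M * real L)) \<le> (\<Prod>t\<in>{1..T}. inverse (1 - 1 / real (p t))) \<and>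
        (\<Prod>t\<in>{1..T}. inverse (1 - 1 / real (p t))) \<le> (3/2) * (ln Q) powr (1 / (real M * real L))
        \<longrightarrow>
        real (card (Hset K x M L p T)) \<le>
          3 * ((16 * real M * real L^2) ^ (8 * M^2 * L^4) * (ln (ln Q)) ^ (4 * M^2 * L^4)
               / (ln Q) ^ (2 * L)) * (real_of_int K * ln x)"
      unfolding Let_def M_def[symmetric]
    proof (intro impI, elim conjE)
      assume h1: "\<forall>t\<in>{1..T}. prime (p t) \<and>
            exp ((ln (Qpar eps x)) powr (4 / (real M * real (Lpar eps x)))) \<le> real (p t) \<and> real (p t) \<le> Qpar eps x"
        and h2: "inj_on p {1..T}" and h3: "(2 * M * (Lpar eps x)^2)^2 \<le> T"
        and h4: "(1/2) * (ln (Qpar eps x)) powr (1 / (real M * real (Lpar eps x))) \<le> (\<Prod>t\<in>{1..T}. inverse (1 - 1 / real (p t)))"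
        and h5: "(\<Prod>t\<in>{1..T}. inverse (1 - 1 / real (p t))) \<le> (3/2) * (ln (Qpar eps x)) powr (1 / (real M * real (Lpar eps x)))"
      show "real (card (Hset K x M (Lpar eps x) p T)) \<le>
          3 * ((16 * real M * real (Lpar eps x)^2) ^ (8 * M^2 * (Lpar eps x)^4) * (ln (ln (Qpar eps x))) ^ (4 * M^2 * (Lpar eps x)^4)
               / (ln (Qpar eps x)) ^ (2 * (Lpar eps x))) * (real_of_int K * ln x)"
        by (rule det_bound[OF M1 as(1,2,3,4) h1 as(5) h2 h3 h4 h5 as(6,7)])
    qed
  qed
  show "\<exists>C>0. \<exists>x0. \<forall>x\<ge>x0. \<forall>(T::nat) (p::nat \<Rightarrow> nat).
      (let L = Lpar eps x; Q = Qpar eps x; M = Mpar K in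
        (\<forall>t\<in>{1..T}. prime (p t) \<and>
            exp ((ln Q) powr (4 / (real M * real L))) \<le> real (p t) \<and> real (p t) \<le> Q) \<and>
        inj_on p {1..T} \<and>
        T \<ge> (2 * M * L^2)^2 \<and>
        (1/2) * (ln Q) powr (1 / (real M * real L)) \<le> (\<Prod>t\<in>{1..T}. inverse (1 - 1 / real (p t))) \<and>
        (\<Prod>t\<in>{1..T}. inverse (1 - 1 / real (p t))) \<le> (3/2) * (ln Q) powr (1 / (real M * real L))
        \<longrightarrow>
        real (card (Hset K x M L p T)) \<le>
          C * ((16 * real M * real L^2) ^ (8 * M^2 * L^4) * (ln (ln Q)) ^ (4 * M^2 * L^4)
               / (ln Q) ^ (2 * L)) * (real_of_int K * ln x))"
    apply (rule exI[of _ "3::real"])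
    apply (rule conjI)
     apply simp
    apply (rule main)
    done
qed

end
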